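(* Let $P=\{\mathbf{u}\in\mathbb{R}^n:\ell_j(\mathbf{u}):=\langle\mathbf{u},\mathbf{v}_j\rangle-\lambda_j\ge0,\ j=1,\dots,m\}$ and, for $i=1,2,\dots$, let $P^{(i)}=\{\mathbf{u}:\ell^{(i)}_j(\mathbf{u}):=\langle\mathbf{u},\mathbf{v}_j\rangle-\lambda^{(i)}_j\ge0,\ j=1,\dots,m\}$ be polytopes, where all these descriptions are non-redundant (each half-space bounds a distinct facet) and the $\mathbf{v}_j\in\mathbb{Z}^n$ are primitive. If $P^{(i)}$ converges to $P$ with respect to the Hausdorff distance, then $\lambda^{(i)}_j-\lambda_j\to0$ as $i\to\infty$ for each $j$.
   Context: The Hausdorff distance between subsets $Q_1,Q_2\subset\mathbb{R}^n$ is $\max\{\sup_{q_1\in Q_1}\inf_{q_2\in Q_2}d(q_1,q_2),\ \sup_{q_2\in Q_2}\inf_{q_1\in Q_1}d(q_1,q_2)\}$ with $d$ the Euclidean distance. *)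

theory Defs
  imports "HOL-Analysis.Analysis"
begin

definition hausdorff_dist :: "'a::metric_space set \<Rightarrow> 'a set \<Rightarrow> real" where
  "hausdorff_dist Q1 Q2 =
     max (SUP q1\<in>Q1. INF q2\<in>Q2. dist q1 q2) (SUP q2\<in>Q2. INF q1\<in>Q1. dist q1 q2)"

definition primitive_int_vec :: "real ^ 'n \<Rightarrow> bool" where
  "primitive_int_vec v \<longleftrightarrow> (\<forall>i. v $ i \<in> \<int>) \<and>
     (\<forall>d::int. (\<forall>i. \<exists>k::int. v $ i = of_int (d * k)) \<longrightarrow> \<bar>d\<bar> = 1)"

definition halfspace_poly :: "nat \<Rightarrow> (nat \<Rightarrow> real ^ 'n) \<Rightarrow> (nat \<Rightarrow> real) \<Rightarrow> (real ^ 'n) set" where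
  "halfspace_poly m v lam = {u. \<forall>j<m. u \<bullet> v j - lam j \<ge> 0}"

definition nonredundant :: "nat \<Rightarrow> (nat \<Rightarrow> real ^ 'n) \<Rightarrow> (nat \<Rightarrow> real) \<Rightarrow> bool" where
  "nonredundant m v lam \<longleftrightarrow>
     (\<forall>j<m. (halfspace_poly m v lam \<inter> {u. u \<bullet> v j - lam j = 0}) facet_of halfspace_poly m v lam) \<and>
     inj_on (\<lambda>j. halfspace_poly m v lam \<inter> {u. u \<bullet> v j - lam j = 0}) {..<m}"

end

theory Submission
  imports Defs
begin

lemma hd1:
  fixes A B :: "'a::real_normed_vector set"
  assumes "bounded A" "B \<noteq> {}" "a \<in> A" "e > 0"
  shows "\<exists>b\<in>B. dist a b < hausdorff_dist A B + e"
proof -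
  define g where "g = (\<lambda>q1. INF q2\<in>B. dist q1 q2)"
  obtain b0 where b0: "b0 \<in> B" using assms(2) by auto
  have bb: "bdd_below ((\<lambda>q2. dist x q2) ` B)" for x by (rule bdd_belowI[of _ 0]) auto
  obtain K where K: "\<And>x. x \<in> A \<Longrightarrow> norm x \<le> K" using assms(1) bounded_iff by blast
  have "g x \<le> K + norm b0" if "x \<in> A" for x
  proof -
    have "g x \<le> dist x b0" unfolding g_def by (rule cINF_lower[OF bb b0])
    also have "\<dots> \<le> norm x + norm b0" by (simp add: dist_norm norm_triangle_ineq4)
    finally show ?thesis using K[OF that] by linarith
  qed
  hence ba: "bdd_above (g ` A)" by (intro bdd_aboveI[of _ "K + norm b0"]) auto
  have "g a \<le> (SUP q1\<in>A. g q1)" by (rule cSUP_upper[OF assms(3) ba])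
  also have "\<dots> \<le> hausdorff_dist A B" unfolding hausdorff_dist_def g_def by simp
  finally have "g a < hausdorff_dist A B + e" using assms(4) by linarith
  thus ?thesis unfolding g_def using cINF_less_iff[OF assms(2) bb] by blast
qed

lemma hd2:
  fixes A B :: "'a::real_normed_vector set"
  assumes "bounded B" "A \<noteq> {}" "b \<in> B" "e > 0"
  shows "\<exists>a\<in>A. dist a b < hausdorff_dist A B + e"
proof -
  have "hausdorff_dist A B = hausdorff_dist B A"
    unfolding hausdorff_dist_def by (simp add: dist_commute max.commute)
  with hd1[OF assms] show ?thesis by (auto simp: dist_commute)
qed

lemma eps_le:
  fixes x y c :: real
  assumes "c \<ge> 0" "\<And>e. e > 0 \<Longrightarrow> x \<le> y + c * e"
  shows "x \<le> y"
proof (rule ccontr)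
  assume "\<not> x \<le> y"
  hence d: "x - y > 0" by simp
  define e where "e = (x - y) / 2 / (c + 1)"
  have e: "e > 0" using d assms(1) unfolding e_def by (intro divide_pos_pos) auto
  have "c * e < x - y"
  proof -
    have "c * e \<le> (c+1) * e" using e by simp
    also have "\<dots> = (x - y) / 2"
    proof -
      have "c + 1 \<noteq> 0" using assms(1) by linarith
      thus ?thesis unfolding e_def by (simp del: divide_divide_eq_left)
    qed
    finally have "c * e \<le> (x - y) / 2" .
    moreover have "(x - y) / 2 < x - y" using d by simp
    ultimately show ?thesis by (rule le_less_trans)
  qed
  with assms(2)[OF e] show False by linarith
qed

lemma inner_diff_le: "(u::'a::real_inner) \<bullet> w - x \<bullet> w \<le> dist u x * norm w"
proof -
  have "u \<bullet> w - x \<bullet> w = (u - x) \<bullet> w" by (simp add: inner_diff_left)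
  also have "\<dots> \<le> norm (u - x) * norm w" by (rule norm_cauchy_schwarz)
  finally show ?thesis by (simp add: dist_norm)
qed

theorem lemma7p2:
  fixes m :: nat
    and v :: "nat \<Rightarrow> real ^ 'n"
    and lam :: "nat \<Rightarrow> real"
    and lamseq :: "nat \<Rightarrow> nat \<Rightarrow> real"
  assumes prim: "\<forall>j<m. primitive_int_vec (v j)"
    and P_poly: "polytope (halfspace_poly m v lam)"
    and P_nr: "nonredundant m v lam"
    and Pi_poly: "\<forall>i. polytope (halfspace_poly m v (lamseq i))"
    and Pi_nr: "\<forall>i. nonredundant m v (lamseq i)"
    and conv: "(\<lambda>i. hausdorff_dist (halfspace_poly m v (lamseq i)) (halfspace_poly m v lam))
                 \<longlonglongrightarrow> 0"
  shows "\<forall>j<m. (\<lambda>i. lamseq i j - lam j) \<longlonglongrightarrow> 0"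
proof (intro allI impI)
  fix j assume j: "j < m"
  define P where "P = halfspace_poly m v lam"
  define Q where "Q = (\<lambda>i. halfspace_poly m v (lamseq i))"
  define h where "h = (\<lambda>i. hausdorff_dist (Q i) P)"
  have bP: "bounded P" using P_poly polytope_imp_bounded P_def by blast
  have bQ: "bounded (Q i)" for i using Pi_poly polytope_imp_bounded Q_def by blast
  obtain u0 where u0: "u0 \<in> P" "u0 \<bullet> v j = lam j"
  proof -
    have "P \<inter> {u. u \<bullet> v j - lam j = 0} \<noteq> {}"
      using P_nr j unfolding nonredundant_def facet_of_def P_def by blast
    then obtain u where "u \<in> P" "u \<bullet> v j - lam j = 0" by blast
    thus ?thesis using that by simp
  qed
  have "\<exists>w. w \<in> Q i \<and> w \<bullet> v j = lamseq i j" for i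
  proof -
    have "Q i \<inter> {u. u \<bullet> v j - lamseq i j = 0} \<noteq> {}"
      using Pi_nr j unfolding nonredundant_def facet_of_def Q_def by blast
    then obtain u where "u \<in> Q i" "u \<bullet> v j - lamseq i j = 0" by blast
    thus ?thesis by auto
  qed
  then obtain w where w: "\<And>i. w i \<in> Q i" "\<And>i. w i \<bullet> v j = lamseq i j" by metis
  have inP: "\<And>u. u \<in> P \<Longrightarrow> u \<bullet> v j \<ge> lam j" using j by (auto simp: P_def halfspace_poly_def)
  have inQ: "\<And>u i. u \<in> Q i \<Longrightarrow> u \<bullet> v j \<ge> lamseq i j" using j by (auto simp: Q_def halfspace_poly_def)
  have bound: "norm (lamseq i j - lam j) \<le> norm (v j) * h i" for i
  proof -
    have "lam j - lamseq i j \<le> norm (v j) * h i"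
    proof (rule eps_le[of "norm (v j)"])
      fix e :: real assume e: "e > 0"
      obtain u where u: "u \<in> P" "dist (w i) u < h i + e"
        using hd1[OF bQ _ w(1) e, of P] u0(1) unfolding h_def by blast
      have "lam j \<le> u \<bullet> v j" using inP u(1) .
      also have "\<dots> \<le> w i \<bullet> v j + dist u (w i) * norm (v j)" using inner_diff_le[of u "v j" "w i"] by linarith
      also have "\<dots> \<le> lamseq i j + (h i + e) * norm (v j)"
        using w(2) u(2) by (simp add: dist_commute mult_right_mono)
      finally show "lam j - lamseq i j \<le> norm (v j) * h i + norm (v j) * e" by (simp add: algebra_simps)
    qed simp
    moreover have "lamseq i j - lam j \<le> norm (v j) * h i"
    proof (rule eps_le[of "norm (v j)"])
      fix e :: real assume e: "e > 0"
      obtain u where u: "u \<in> Q i" "dist u u0 < h i + e"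
        using hd2[OF bP _ u0(1) e, of "Q i"] w(1) unfolding h_def by blast
      have "lamseq i j \<le> u \<bullet> v j" using inQ u(1) .
      also have "\<dots> \<le> u0 \<bullet> v j + dist u u0 * norm (v j)" using inner_diff_le[of u "v j" u0] by linarith
      also have "\<dots> \<le> lam j + (h i + e) * norm (v j)"
        using u0(2) u(2) by (simp add: mult_right_mono)
      finally show "lamseq i j - lam j \<le> norm (v j) * h i + norm (v j) * e" by (simp add: algebra_simps)
    qed simp
    ultimately show ?thesis by simp
  qed
  have "(\<lambda>i. norm (v j) * h i) \<longlonglongrightarrow> 0"
  proof -
    have "h \<longlonglongrightarrow> 0" using conv unfolding h_def Q_def P_def .
    thus ?thesis by (rule tendsto_mult_right_zero)
  qed
  thus "(\<lambda>i. lamseq i j - lam j) \<longlonglongrightarrow> 0"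
  proof -
    have ev: "eventually (\<lambda>i. norm (lamseq i j - lam j) \<le> norm (v j) * h i) sequentially"
      using bound by simp
    show ?thesis by (rule Lim_null_comparison[OF ev]) fact
  qed
qed

end
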